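(* For all integers $m \geq 3$ and $k$ with $2 \leq k \leq m-1$, $$\mathbb{P}_{X \sim B(m,\frac{k}{m})}\big[X \leq k\big] \leq 0.7152.$$
   Context: $B(m,p)$ denotes the binomial distribution with $m$ trials and success probability $p$: $\mathbb{P}[X=j]=\binom{m}{j}p^j(1-p)^{m-j}$ for $j=0,\dots,m$. *)

theory Defs
  imports "HOL-Probability.Probability"
begin

end

theory Submission
  imports Defs
begin

definition F :: "nat \<Rightarrow> nat \<Rightarrow> real \<Rightarrow> real" where
  "F m k p = (\<Sum>j\<le>k. real (m choose j) * p^j * (1-p)^(m-j))"

lemma prob_eq:
  assumes "0 \<le> p" "p \<le> 1"
  shows "measure_pmf.prob (binomial_pmf m p) {..k} = F m k p"
  unfolding F_def by (simp add: measure_measure_pmf_finite pmf_binomial[OF assms])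

lemma F_rec:
  assumes "k < m"
  shows "F (Suc m) k p = F m k p - p * real (m choose k) * p^k * (1-p)^(m-k)"
  using assms
proof (induction k)
  case 0
  have "F (Suc m) 0 p = (1-p) * (1-p)^m" by (simp add: F_def)
  moreover have "F m 0 p = (1-p)^m" by (simp add: F_def)
  ultimately show ?case by (simp add: left_diff_distrib)
next
  case (Suc k)
  have IH: "F (Suc m) k p = F m k p - p * real (m choose k) * p^k * (1-p)^(m-k)"
    using Suc by simp
  have mk: "m - k = Suc (m - Suc k)" using Suc.prems by simp
  define X where "X = real (m choose Suc k) * p^(Suc k) * (1-p)^(m - Suc k)"
  define Y where "Y = real (m choose k) * p^(Suc k) * (1-p)^(m - k)"
  have FS: "F m (Suc k) p = F m k p + X" by (simp add: F_def X_def)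
  have "F (Suc m) (Suc k) p = F (Suc m) k p + real (Suc m choose Suc k) * p^(Suc k) * (1-p)^(m - k)"
    by (simp add: F_def)
  also have "\<dots> = F (Suc m) k p + (real (m choose Suc k) + real (m choose k)) * p^(Suc k) * (1-p)^(m - k)"
    by simp
  also have "\<dots> = F (Suc m) k p + real (m choose Suc k) * p^(Suc k) * (1-p)^(m - k) + Y"
    unfolding Y_def by (simp only: distrib_right)
  also have "real (m choose Suc k) * p^(Suc k) * (1-p)^(m - k) = X - p * X"
    unfolding X_def mk by (simp only: power_Suc) (simp only: algebra_simps)
  also have "F (Suc m) k p = F m k p - Y"
    unfolding IH Y_def by (simp only: power_Suc mult.assoc mult.left_commute)
  finally show ?case
    unfolding FS X_def by (simp only: algebra_simps power_Suc[symmetric])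
qed

lemma F_deriv:
  assumes "k < m"
  shows "DERIV (F m k) x :> - (real (m-k) * real (m choose k) * x^k * (1-x)^(m-k-1))"
  using assms
proof (induction k)
  case 0
  have "F m 0 = (\<lambda>x. (1-x)^m)" by (auto simp: F_def)
  then show ?case
    by (auto intro!: derivative_eq_intros)
next
  case (Suc k)
  have IH: "DERIV (F m k) x :> - (real (m-k) * real (m choose k) * x^k * (1-x)^(m-k-1))"
    using Suc by simp
  have eqF: "F m (Suc k) = (\<lambda>x. F m k x + real (m choose Suc k) * x^(Suc k) * (1-x)^(m - Suc k))"
    by (auto simp: F_def)
  have D: "DERIV (\<lambda>x. real (m choose Suc k) * x^(Suc k) * (1-x)^(m - Suc k)) x :>
     real (m choose Suc k) * (real (Suc k) * x^k * (1-x)^(m - Suc k)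
       - x^(Suc k) * (real (m - Suc k) * (1-x)^(m - Suc k - 1)))"
  proof -
    have "DERIV (\<lambda>x. x^(Suc k) * (1-x)^(m - Suc k)) x :>
      (real (Suc k) * x^k * (1-x)^(m - Suc k)
       - x^(Suc k) * (real (m - Suc k) * (1-x)^(m - Suc k - 1)))"
      by (rule DERIV_cong[OF DERIV_mult[OF DERIV_pow DERIV_power[OF DERIV_diff[OF DERIV_const DERIV_ident]]]]) simp
    then show ?thesis using DERIV_cmult by (fastforce simp: mult.assoc)
  qed
  have bn: "Suc k * (m choose Suc k) = (m - k) * (m choose k)"
  proof -
    have a: "Suc k * (Suc m choose Suc k) = Suc m * (m choose k)" by (rule Suc_times_binomial)
    have "Suc k * (m choose Suc k) + Suc k * (m choose k) = Suc m * (m choose k)"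
      using a by (simp add: algebra_simps)
    then have "Suc k * (m choose Suc k) = (Suc m - Suc k) * (m choose k)"
      by (simp add: diff_mult_distrib)
    then show ?thesis by simp
  qed
  have binom: "real (Suc k) * real (m choose Suc k) = real (m - k) * real (m choose k)"
    using bn by (metis of_nat_mult)
  have e1: "(1-x)^(m-k-1) = (1-x)^(m - Suc k)" by simp
  show ?case
    unfolding eqF
    apply (rule DERIV_cong[OF DERIV_add[OF IH D]])
  proof -
    have "real (m choose Suc k) * (real (Suc k) * x^k * (1-x)^(m - Suc k))
        = real (m - k) * real (m choose k) * x^k * (1-x)^(m-k-1)"
      using binom by (simp add: e1 mult.assoc[symmetric]) (simp add: algebra_simps)
    then show "- (real (m - k) * real (m choose k) * x ^ k * (1 - x) ^ (m - k - 1)) +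
    real (m choose Suc k) *
    (real (Suc k) * x ^ k * (1 - x) ^ (m - Suc k) -
     x ^ Suc k * (real (m - Suc k) * (1 - x) ^ (m - Suc k - 1))) =
    - (real (m - Suc k) * real (m choose Suc k) * x ^ Suc k *
       (1 - x) ^ (m - Suc k - 1))"
      by (simp add: algebra_simps)
  qed
qed

lemma E2_step:
  fixes n :: nat assumes "1 \<le> n"
  shows "(1 + 1/real (Suc n))^(Suc (Suc n)) \<le> (1 + 1/real n)^(Suc n)"
proof -
  define a where "a = (real n + 1)/real n"
  define b where "b = (real n + 1)/(real n + 2)"
  have b0: "0 < b" using assms by (simp add: b_def)
  have a0: "0 < a" using assms by (simp add: a_def)
  have ab: "a * b = 1 + 1/(real n * (real n + 2))"
  proof -
    have "real n * (real n + 2) \<noteq> 0" "real n \<noteq> 0" using assms by auto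
    then show ?thesis by (simp add: a_def b_def divide_simps) (simp add: algebra_simps)
  qed
  have "1 + real (Suc (Suc n)) * (1/(real n * (real n + 2))) \<le> (a*b)^(Suc (Suc n))"
    unfolding ab by (rule Bernoulli_inequality) (smt (verit) divide_nonneg_nonneg of_nat_0_le_iff zero_le_mult_iff)
  moreover have "1 + real (Suc (Suc n)) * (1/(real n * (real n + 2))) = a"
  proof -
    have "real n * (real n + 2) \<noteq> 0" "real n \<noteq> 0" using assms by auto
    then show ?thesis by (simp add: a_def divide_simps) (simp add: algebra_simps)
  qed
  ultimately have "a * 1 \<le> a * (a^(Suc n) * b^(Suc (Suc n)))" by (simp add: power_mult_distrib algebra_simps)
  then have h: "1 \<le> a^(Suc n) * b^(Suc (Suc n))" using a0 by (simp only: mult_le_cancel_left_pos)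
  have "(1 + 1/real (Suc n))^(Suc (Suc n)) = (1/b)^(Suc (Suc n))" by (simp add: b_def field_simps)
  also have "\<dots> \<le> a^(Suc n)"
    using h b0 by (simp add: power_one_over field_simps)
  also have "a^(Suc n) = (1 + 1/real n)^(Suc n)" using assms by (simp add: a_def field_simps)
  finally show ?thesis .
qed

lemma E2_bound:
  fixes k :: nat assumes "2 \<le> k"
  shows "(1 + 1/real k)^(Suc k) \<le> 27/8"
  using assms
proof (induction k rule: dec_induct)
  case base then show ?case by (simp add: numeral_eq_Suc)
next
  case (step n)
  have "1 \<le> n" using step by simp
  then show ?case using E2_step[of n] step(3) by linarith
qed

lemma phi_deriv_eq:
  fixes C S t a b mm kk :: real
  assumes "mm > 0" and kk: "kk = mm * S + t"
  shows "- ((mm - kk) * C * (S * a) * b) * (-1/mm)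
    - (1 * (C * ((S * a) * ((1-S) * b))) + (C * (kk * ((-1/mm) * a) * ((1-S) * b)
        + (mm - kk) * ((1/mm) * b) * (S * a))) * t)
   = C * a * b * (t * (t - S)) / mm"
  using assms(1) unfolding kk by (simp add: field_simps)

lemma F_step:
  assumes k0: "0 < k" and km: "k < m"
  shows "F (Suc m) k (real k / real (Suc m)) \<le> F m k (real k / real m)"
proof -
  define C where "C = real (m choose k)"
  define s where "s t = (real k - t) / real m" for t
  define h where "h t = t * (C * (s t ^ k * (1 - s t)^(m-k)))" for t
  define \<phi> where "\<phi> t = F m k (s t) - h t" for t
  define \<phi>' where "\<phi>' t = - (real (m-k) * C * s t^k * (1 - s t)^(m-k-1)) * (-1/real m)
    - (1 * (C * (s t^k * (1 - s t)^(m-k))) + (C * (real k * ((-1/real m) * s t^(k - Suc 0)) * (1 - s t)^(m-k)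
        + real (m-k) * ((1/real m) * (1 - s t)^(m-k - Suc 0)) * s t^k)) * t)" for t
  have m0: "0 < real m" using km by simp
  have ds: "DERIV s t :> -1/real m" for t
    unfolding s_def using m0 by (auto intro!: derivative_eq_intros simp: field_simps)
  have D: "DERIV \<phi> t :> \<phi>' t" for t
  proof -
    have dF: "DERIV (\<lambda>t. F m k (s t)) t :> (- (real (m-k) * C * s t^k * (1 - s t)^(m-k-1))) * (-1/real m)"
      using DERIV_chain2[OF F_deriv[OF km] ds] by (simp add: C_def)
    have d1: "DERIV (\<lambda>t. s t ^ k) t :> real k * ((-1/real m) * s t^(k - Suc 0))"
      by (rule DERIV_power[OF ds])
    have d2': "DERIV (\<lambda>t. 1 - s t) t :> 1/real m"
      using DERIV_diff[OF DERIV_const ds, of 1] by simp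
    have d2: "DERIV (\<lambda>t. (1 - s t) ^ (m-k)) t :> real (m-k) * ((1/real m) * (1 - s t)^(m-k - Suc 0))"
      by (rule DERIV_power[OF d2'])
    have d3: "DERIV (\<lambda>t. s t ^ k * (1 - s t)^(m-k)) t :>
       real k * ((-1/real m) * s t^(k - Suc 0)) * (1 - s t)^(m-k) + real (m-k) * ((1/real m) * (1 - s t)^(m-k - Suc 0)) * s t^k"
      by (rule DERIV_mult[OF d1 d2])
    have d4: "DERIV h t :> 1 * (C * (s t^k * (1 - s t)^(m-k))) + (C * (real k * ((-1/real m) * s t^(k - Suc 0)) * (1 - s t)^(m-k)
        + real (m-k) * ((1/real m) * (1 - s t)^(m-k - Suc 0)) * s t^k)) * t"
      unfolding h_def[abs_def] by (rule DERIV_mult[OF DERIV_ident DERIV_cmult[OF d3]])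
    show ?thesis unfolding \<phi>_def[abs_def] \<phi>'_def using DERIV_diff[OF dF d4] by simp
  qed
  define q where "q = real k / real (Suc m)"
  have q0: "0 < q" using k0 by (simp add: q_def)
  obtain z where z: "0 < z" "z < q" and zeq: "\<phi> q - \<phi> 0 = (q - 0) * \<phi>' z"
    using MVT2[OF q0, of \<phi> \<phi>'] D by blast
  have sq: "s q = q"
  proof -
    have "real k - q = real m * q" by (simp add: q_def field_simps)
    then show ?thesis using m0 by (simp add: s_def)
  qed
  have zs: "z \<le> s z"
  proof -
    have "real m * z + z \<le> real k" using z m0 q0 unfolding q_def
      by (simp add: field_simps)
    then show ?thesis using m0 by (simp add: s_def field_simps)
  qed
  have sz1: "s z < 1" using m0 km z by (simp add: s_def field_simps)
  have "\<phi>' z \<le> 0"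
  proof -
    define S where "S = s z"
    define a where "a = S^(k - Suc 0)"
    define b where "b = (1-S)^(m - k - Suc 0)"
    have Sk: "S^k = S * a"
    proof -
      have "k = Suc (k - Suc 0)" using k0 by simp
      then have "S^k = S^(Suc (k - Suc 0))" by (rule arg_cong)
      then show ?thesis unfolding a_def by (simp only: power_Suc)
    qed
    have Sk2: "(1-S)^(m-k) = (1-S) * b"
    proof -
      have "m - k = Suc (m - k - Suc 0)" using km by simp
      then have "(1-S)^(m-k) = (1-S)^(Suc (m - k - Suc 0))" by (rule arg_cong)
      then show ?thesis unfolding b_def by (simp only: power_Suc)
    qed
    have mk1: "m - k - 1 = m - k - Suc 0" by simp
    have rk: "real (m - k) = real m - real k" using km by (simp add: of_nat_diff)
    have kk: "real k = real m * S + z" using m0 by (simp add: S_def s_def field_simps)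
    have "\<phi>' z = C * a * b * (z * (z - S)) / real m"
      unfolding \<phi>'_def S_def[symmetric] Sk Sk2 mk1 b_def[symmetric] a_def[symmetric] rk
      by (rule phi_deriv_eq[OF m0 kk])
    moreover have "C * a * b * (z * (z - S)) / real m \<le> 0"
    proof -
      have "0 \<le> a" "0 \<le> b" "0 \<le> C" using zs z sz1 by (auto simp: a_def b_def C_def S_def)
      moreover have "z * (z - S) \<le> 0" using zs z by (simp add: S_def mult_nonneg_nonpos)
      ultimately show ?thesis using m0
        by (simp add: divide_nonpos_pos mult_nonneg_nonpos)
    qed
    ultimately show ?thesis by simp
  qed
  then have "q * \<phi>' z \<le> 0" using q0 by (simp add: mult_nonneg_nonpos)
  then have "\<phi> q \<le> \<phi> 0" using zeq by simp
  moreover have "\<phi> 0 = F m k (real k / real m)" by (simp add: \<phi>_def h_def s_def)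
  moreover have "\<phi> q = F (Suc m) k q"
    unfolding \<phi>_def h_def sq using F_rec[OF km, of q] by (simp add: C_def algebra_simps)
  ultimately show ?thesis by (simp add: q_def)
qed

lemma F_full: "F m m p = 1"
proof -
  have "F m m p = (p + (1-p))^m"
    unfolding F_def by (subst binomial_ring) (simp add: atLeast0AtMost)
  then show ?thesis by simp
qed

lemma F_base: "F (Suc k) k p = 1 - p^(Suc k)"
proof -
  have "F (Suc k) (Suc k) p = F (Suc k) k p + p^(Suc k)"
    by (simp add: F_def)
  then show ?thesis using F_full[of "Suc k" p] by simp
qed

lemma F_chain:
  assumes k0: "0 < k" and km: "Suc k \<le> m"
  shows "F m k (real k / real m) \<le> F (Suc k) k (real k / real (Suc k))"
  using km
proof (induction m rule: dec_induct)
  case base then show ?case by simp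
next
  case (step n)
  have "k < n" using step by simp
  then show ?case using F_step[OF k0, of n] step(3) by linarith
qed

theorem corollary2:
  fixes m k :: nat
  assumes "m \<ge> 3" and "2 \<le> k" and "k \<le> m - 1"
  shows "measure_pmf.prob (binomial_pmf m (real k / real m)) {..k} \<le> 0.7152"
proof -
  have km: "Suc k \<le> m" using assms by simp
  have k0: "0 < k" using assms by simp
  have p0: "0 \<le> real k / real m" by simp
  have p1: "real k / real m \<le> 1" using km by simp
  have "measure_pmf.prob (binomial_pmf m (real k / real m)) {..k} = F m k (real k / real m)"
    by (rule prob_eq[OF p0 p1])
  also have "\<dots> \<le> F (Suc k) k (real k / real (Suc k))" by (rule F_chain[OF k0 km])
  also have "\<dots> = 1 - (real k / real (Suc k))^(Suc k)" by (rule F_base)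
  also have "\<dots> \<le> 0.7152"
  proof -
    have E: "(1 + 1/real k)^(Suc k) \<le> 27/8" using E2_bound assms by simp
    have kk: "real k / real (Suc k) = 1 / (1 + 1/real k)" using k0 by (simp add: field_simps)
    have pos: "0 < (1 + 1/real k)^(Suc k)" by (intro zero_less_power) (simp add: add_pos_nonneg)
    have "(real k / real (Suc k))^(Suc k) = 1 / (1 + 1/real k)^(Suc k)"
      unfolding kk by (simp add: power_one_over)
    also have "\<dots> \<ge> 1 / (27/8)" using E pos by (intro divide_left_mono) auto
    finally have "(real k / real (Suc k))^(Suc k) \<ge> 8/27" by simp
    then show ?thesis by simp
  qed
  finally show ?thesis .
qed

end
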